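(* Let $X$ be a topological space, $Y$ a completely regular space, $G$ an infinite open subset of $Y$, $g,h:X\to\mathbb R$ continuous functions with $g\le0\le h$, and $A$ a functionally closed subset of $X$. Then there exists a separately continuous function $f:X\times Y\to\mathbb R$ such that $\operatorname{supp}f\subseteq(X\setminus A)\times G$ and, for every $x\in X\setminus A$, $\min_{y\in G}f(x,y)=g(x)$ and $\max_{y\in G}f(x,y)=h(x)$ (the minimum and maximum being attained).
   Context: Completely regular spaces are assumed $T_1$. $A\subseteq X$ is functionally closed if $A=\alpha^{-1}(0)$ for some continuous $\alpha:X\to[0,1]$. $\operatorname{supp}f=\{(x,y):f(x,y)\ne0\}$. $f$ is separately continuous if it is continuous in each variable when the other is fixed. *)

theory Defs
  imports "HOL-Analysis.Analysis"
begin

definition functionally_closed :: "'a topology \<Rightarrow> 'a set \<Rightarrow> bool" where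
  "functionally_closed X A \<longleftrightarrow>
     (\<exists>\<alpha>::'a \<Rightarrow> real. continuous_map X (top_of_set {0..1}) \<alpha> \<and>
        A = {x \<in> topspace X. \<alpha> x = 0})"

definition separately_continuous ::
  "'a topology \<Rightarrow> 'b topology \<Rightarrow> ('a \<Rightarrow> 'b \<Rightarrow> real) \<Rightarrow> bool" where
  "separately_continuous X Y f \<longleftrightarrow>
     (\<forall>x \<in> topspace X. continuous_map Y euclideanreal (\<lambda>y. f x y)) \<and>
     (\<forall>y \<in> topspace Y. continuous_map X euclideanreal (\<lambda>x. f x y))"

definition supp2 :: "'a topology \<Rightarrow> 'b topology \<Rightarrow> ('a \<Rightarrow> 'b \<Rightarrow> real) \<Rightarrow> ('a \<times> 'b) set" where
  "supp2 X Y f = {(x, y). x \<in> topspace X \<and> y \<in> topspace Y \<and> f x y \<noteq> 0}"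

end

theory Submission
  imports Defs
begin

lemma step_lemma:
  assumes H: "Hausdorff_space Y" and Z: "openin Y Z" "infinite Z"
  shows "\<exists>W Z'. openin Y W \<and> W \<noteq> {} \<and> W \<subseteq> Z \<and> openin Y Z' \<and> infinite Z' \<and> Z' \<subseteq> Z \<and> W \<inter> Z' = {}"
proof -
  have T1: "t1_space Y" using H by (simp add: Hausdorff_imp_t1_space)
  obtain a where a: "a \<in> Z" using Z(2) by (metis ex_in_conv finite.emptyI)
  have "infinite (Z - {a})" using Z(2) by simp
  then obtain b where b: "b \<in> Z - {a}" by (metis ex_in_conv finite.emptyI)
  have ab: "a \<in> Z" "b \<in> Z" "a \<noteq> b" using a b by auto
  have ZY: "Z \<subseteq> topspace Y" using Z(1) openin_subset by auto
  have aY: "a \<in> topspace Y" and bY: "b \<in> topspace Y" using ab ZY by auto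
  obtain U V where UV: "openin Y U" "openin Y V" "a \<in> U" "b \<in> V" "disjnt U V"
    using H aY bY ab(3) unfolding Hausdorff_space_def by metis
  define U' where "U' = U \<inter> Z"
  define V' where "V' = V \<inter> Z"
  have oU': "openin Y U'" "openin Y V'" using UV Z unfolding U'_def V'_def by auto
  have U'Y: "U' \<subseteq> topspace Y" using oU' openin_subset by auto
  show ?thesis
  proof (cases "finite (Z - Y closure_of U')")
    case False
    have o1: "openin Y (Z - Y closure_of U')" using Z(1) by (simp add: openin_diff)
    have d1: "U' \<inter> (Z - Y closure_of U') = {}"
      using closure_of_subset[OF U'Y] by auto
    have "U' \<noteq> {}" "U' \<subseteq> Z" using ab UV unfolding U'_def by auto
    then show ?thesis using False oU' o1 d1
      by (intro exI[of _ U'] exI[of _ "Z - Y closure_of U'"]) auto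
  next
    case True
    have "V \<inter> U' = {}" using UV(5) unfolding U'_def disjnt_def by auto
    then have "V \<inter> Y closure_of U' = {}"
      using openin_Int_closure_of_eq_empty[OF UV(2)] by simp
    then have "V' \<subseteq> Z - Y closure_of U'" unfolding V'_def by auto
    then have fV: "finite V'" using True finite_subset by auto
    have "V' \<subseteq> topspace Y" using oU'(2) openin_subset by auto
    then have "closedin Y (V' - {b})" using T1 fV
      unfolding t1_space_closedin_finite by auto
    then have "openin Y (V' - (V' - {b}))" using oU'(2) by (simp add: openin_diff)
    moreover have "V' - (V' - {b}) = {b}" using ab UV unfolding V'_def by auto
    ultimately have ob: "openin Y {b}" by simp
    have "openin Y (Z - {b})" using Z(1) closedin_t1_singleton[OF T1 bY] by (simp add: openin_diff)
    then show ?thesis using ob ab Z(2) by (intro exI[of _ "{b}"] exI[of _ "Z - {b}"]) auto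
  qed
qed

lemma disjoint_family_lemma:
  assumes H: "Hausdorff_space Y" and G: "openin Y G" "infinite G"
  shows "\<exists>W :: nat \<Rightarrow> 'b set. (\<forall>n. openin Y (W n) \<and> W n \<noteq> {} \<and> W n \<subseteq> G) \<and>
            (\<forall>m n. m \<noteq> n \<longrightarrow> W m \<inter> W n = {})"
proof -
  define P where "P = (\<lambda>Z. openin Y Z \<and> infinite Z)"
  define Q where "Q = (\<lambda>Z p. openin Y (fst p) \<and> fst p \<noteq> {} \<and> fst p \<subseteq> Z \<and> P (snd p) \<and> snd p \<subseteq> Z \<and> fst p \<inter> snd p = {})"
  have stp: "P Z \<Longrightarrow> Q Z (SOME p. Q Z p)" for Z
  proof -
    assume PZ: "P Z"
    have o: "openin Y Z" and i: "infinite Z" using PZ unfolding P_def by simp_all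
    from step_lemma[OF H o i] obtain W Z' where "openin Y W \<and> W \<noteq> {} \<and> W \<subseteq> Z \<and> openin Y Z' \<and> infinite Z' \<and> Z' \<subseteq> Z \<and> W \<inter> Z' = {}"
      by (elim exE)
    then have "Q Z (W, Z')" unfolding Q_def P_def by simp
    then show ?thesis by (rule someI)
  qed
  define Zs where "Zs = rec_nat G (\<lambda>n Z. snd (SOME p. Q Z p))"
  have Zs0: "Zs 0 = G" and ZsS: "Zs (Suc n) = snd (SOME p. Q (Zs n) p)" for n
    unfolding Zs_def by simp_all
  define W where "W = (\<lambda>n. fst (SOME p. Q (Zs n) p))"
  have PZ: "P (Zs n)" for n
  proof (induction n)
    case 0 then show ?case using G Zs0 unfolding P_def by simp
  next
    case (Suc n) then show ?case using stp[OF Suc] ZsS unfolding Q_def by simp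
  qed
  have QW: "Q (Zs n) (W n, Zs (Suc n))" for n
    using stp[OF PZ[of n]] unfolding W_def ZsS by simp
  have mono: "Zs (m + k) \<subseteq> Zs m" for m k
  proof (induction k)
    case 0 then show ?case by simp
  next
    case (Suc k) then show ?case using QW[of "m+k"] unfolding Q_def by auto
  qed
  have sub: "W n \<subseteq> Zs n" "W n \<inter> Zs (Suc n) = {}" for n using QW[of n] unfolding Q_def by auto
  have disj: "W m \<inter> W n = {}" if "m < n" for m n
  proof -
    obtain k where "n = Suc m + k" using \<open>m < n\<close> less_iff_Suc_add by auto
    then have "W n \<subseteq> Zs (Suc m)" using sub(1)[of n] mono[of "Suc m" k] by auto
    then show ?thesis using sub(2)[of m] by auto
  qed
  have c1: "openin Y (W n) \<and> W n \<noteq> {} \<and> W n \<subseteq> G" for n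
    using QW[of n] mono[of 0 n] Zs0 unfolding Q_def by auto
  have c2: "W m \<inter> W n = {}" if "m \<noteq> n" for m n
    using disj[of m n] disj[of n m] that by (cases "m < n") auto
  show ?thesis using c1 c2 by blast
qed

lemma bump_lemma:
  assumes "completely_regular_space Y" "openin Y W" "y \<in> W"
  shows "\<exists>\<phi>. continuous_map Y euclideanreal \<phi> \<and> \<phi> y = 1 \<and>
     (\<forall>z \<in> topspace Y. 0 \<le> \<phi> z \<and> \<phi> z \<le> 1) \<and> (\<forall>z \<in> topspace Y - W. \<phi> z = 0)"
proof -
  have "closedin Y (topspace Y - W)" using assms(2) by auto
  moreover have "y \<in> topspace Y - (topspace Y - W)" using assms(2,3) openin_subset by auto
  ultimately have "\<exists>f::'a\<Rightarrow>real. continuous_map Y (top_of_set {0..1}) f \<and> f y = 0 \<and> f ` (topspace Y - W) \<subseteq> {1}"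
    using assms(1) unfolding completely_regular_space_def by blast
  then obtain f :: "'a \<Rightarrow> real" where f: "continuous_map Y (top_of_set {0..1}) f" "f y = 0" "f ` (topspace Y - W) \<subseteq> {1}"
    by blast
  have fr: "continuous_map Y euclideanreal f" using f(1) continuous_map_into_fulltopology by blast
  have fv: "z \<in> topspace Y \<Longrightarrow> f z \<in> {0..1}" for z using f(1) unfolding continuous_map_def by auto
  show ?thesis
  proof (intro exI[of _ "\<lambda>z. 1 - f z"] conjI ballI)
    show "continuous_map Y euclideanreal (\<lambda>z. 1 - f z)" using fr by (intro continuous_intros)
  qed (use f fv in auto)
qed


definition tau :: "nat \<Rightarrow> real \<Rightarrow> real" where
  "tau n t = max 0 (min 1 (min (2^(n+2)*t - 1) (2 - 2^n*t)))"

lemma tau_cont: "continuous_map X euclideanreal a \<Longrightarrow> continuous_map X euclideanreal (\<lambda>x. tau n (a x))"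
  unfolding tau_def by (intro continuous_intros) auto

lemma tau_range: "0 \<le> tau n t" "tau n t \<le> 1"
  unfolding tau_def by auto

lemma tau_alt: "tau n t = max 0 (min 1 (min (4*(2^n*t) - 1) (2 - 2^n*t)))"
  unfolding tau_def by (simp add: power_add mult.assoc)

lemma tau_gen: "a = 2^n*t \<Longrightarrow> tau n t = max 0 (min 1 (min (4*a - 1) (2 - a)))"
  using tau_alt by simp

lemma tau_nonpos: "t \<le> 0 \<Longrightarrow> tau n t = 0"
proof -
  assume "t \<le> 0"
  then have a: "(2::real)^n*t \<le> 0" by (simp add: mult_nonneg_nonpos)
  define a where "a = (2::real)^n*t"
  have "tau n t = max 0 (min 1 (min (4*a - 1) (2 - a)))" using tau_gen a_def by blast
  then show ?thesis using a unfolding a_def[symmetric] by simp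
qed

lemma tau_big: "2 \<le> 2^n*t \<Longrightarrow> tau n t = 0"
proof -
  assume a0: "2 \<le> 2^n*t"
  define a where "a = (2::real)^n*t"
  have "tau n t = max 0 (min 1 (min (4*a - 1) (2 - a)))" using tau_gen a_def by blast
  then show ?thesis using a0 unfolding a_def[symmetric] by simp
qed

lemma tau_finite: "finite {n. tau n t \<noteq> 0}"
proof (cases "t \<le> 0")
  case True then show ?thesis using tau_nonpos by simp
next
  case False
  then have t: "t > 0" by simp
  have "n \<le> nat \<lceil>2/t\<rceil>" if "tau n t \<noteq> 0" for n
  proof -
    have "2^n * t < 2" using that tau_big by force
    moreover have "real n < 2^n" by (rule of_nat_less_two_power)
    ultimately have "real n * t < 2" using t
      by (smt (verit) mult_strict_right_mono)
    then have "real n < 2/t" using t by (simp add: field_simps)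
    then show ?thesis by linarith
  qed
  then show ?thesis by (meson finite_nat_set_iff_bounded_le mem_Collect_eq)
qed

lemma tau_one: assumes "0 < t" "t \<le> 1" shows "\<exists>n. tau n t = 1"
proof -
  obtain N where "1/t < 2^N" using real_arch_pow[of 2 "1/t"] by auto
  then have ex: "1 < 2^N * t" using assms by (simp add: field_simps)
  define m where "m = (LEAST n. 1 < (2::real)^n * t)"
  have m1: "1 < 2^m * t" unfolding m_def by (rule LeastI[of _ N]) (rule ex)
  have "m \<noteq> 0"
  proof
    assume "m = 0"
    with m1 have "1 < t" by simp
    with assms show False by simp
  qed
  then obtain k where k: "m = Suc k" by (cases m) auto
  have "\<not> (1 < (2::real)^k * t)" using not_less_Least[of k "\<lambda>n. 1 < (2::real)^n * t"] k m_def by auto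
  then have k1: "2^k * t \<le> 1" by simp
  define a where "a = (2::real)^k*t"
  have "2^m * t = 2 * a" using k unfolding a_def by simp
  then have a1: "1 < 2 * a" using m1 by simp
  have "tau k t = max 0 (min 1 (min (4*a - 1) (2 - a)))" using tau_gen a_def by blast
  then have "tau k t = 1" using a1 k1 unfolding a_def[symmetric] by simp
  then show ?thesis by blast
qed

lemma sum_single:
  assumes "finite N" "\<And>n. n \<noteq> m \<Longrightarrow> c n = 0" "m \<notin> N \<Longrightarrow> c m = 0"
  shows "sum c N = (c m :: real)"
proof (cases "m \<in> N")
  case True
  then have "sum c N = c m + sum c (N - {m})" using assms(1) by (simp add: sum.remove)
  also have "sum c (N - {m}) = 0" using assms(2) by (intro sum.neutral) auto
  finally show ?thesis by simp
next
  case False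
  then show ?thesis using assms by (metis sum.neutral)
qed

lemma aux_g: "(g::real) \<le> 0 \<Longrightarrow> 0 \<le> s \<Longrightarrow> s \<le> 1 \<Longrightarrow> g \<le> g * s \<and> g * s \<le> 0"
  by (metis mult.right_neutral mult_left_mono_neg mult_nonpos_nonneg)

lemma aux_h: "(h::real) \<ge> 0 \<Longrightarrow> 0 \<le> s \<Longrightarrow> s \<le> 1 \<Longrightarrow> 0 \<le> h * s \<and> h * s \<le> h"
  by (simp add: mult_left_le)

theorem lemma7p1:
  fixes X :: "'a topology" and Y :: "'b topology"
    and G :: "'b set" and A :: "'a set" and g h :: "'a \<Rightarrow> real"
  assumes "completely_regular_space Y" and "t1_space Y"
    and "openin Y G" and "infinite G"
    and "continuous_map X euclideanreal g" and "continuous_map X euclideanreal h"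
    and "\<forall>x \<in> topspace X. g x \<le> 0 \<and> 0 \<le> h x"
    and "functionally_closed X A"
  shows "\<exists>f :: 'a \<Rightarrow> 'b \<Rightarrow> real.
           separately_continuous X Y f \<and>
           supp2 X Y f \<subseteq> (topspace X - A) \<times> G \<and>
           (\<forall>x \<in> topspace X - A.
              (\<exists>y \<in> G. f x y = g x) \<and> (\<forall>y \<in> G. g x \<le> f x y) \<and>
              (\<exists>y \<in> G. f x y = h x) \<and> (\<forall>y \<in> G. f x y \<le> h x))"
proof -
  obtain \<alpha> :: "'a \<Rightarrow> real" where al: "continuous_map X (top_of_set {0..1}) \<alpha>"
    and Aeq: "A = {x \<in> topspace X. \<alpha> x = 0}"
    using assms(8) unfolding functionally_closed_def by blast
  have alr: "continuous_map X euclideanreal \<alpha>" using al continuous_map_into_fulltopology by blast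
  have alv: "x \<in> topspace X \<Longrightarrow> 0 \<le> \<alpha> x \<and> \<alpha> x \<le> 1" for x
    using al unfolding continuous_map_def by auto
  have H: "Hausdorff_space Y"
    using regular_t1_imp_Hausdorff_space[OF completely_regular_imp_regular_space[OF assms(1)] assms(2)] .
  obtain W :: "nat \<Rightarrow> 'b set" where W: "\<And>n. openin Y (W n) \<and> W n \<noteq> {} \<and> W n \<subseteq> G"
    and Wd: "\<And>m n. m \<noteq> n \<Longrightarrow> W m \<inter> W n = {}"
    using disjoint_family_lemma[OF H assms(3,4)] by blast
  define pt where "pt = (\<lambda>n. SOME y. y \<in> W n)"
  have pt: "pt n \<in> W n" for n unfolding pt_def using W[of n] by (simp add: some_in_eq)
  have GY: "G \<subseteq> topspace Y" using assms(3) openin_subset by auto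
  have "\<forall>n. \<exists>\<phi>. continuous_map Y euclideanreal \<phi> \<and> \<phi> (pt n) = 1 \<and>
     (\<forall>z \<in> topspace Y. 0 \<le> \<phi> z \<and> \<phi> z \<le> 1) \<and> (\<forall>z \<in> topspace Y - W n. \<phi> z = 0)"
    using bump_lemma[OF assms(1)] W pt by blast
  then obtain B :: "nat \<Rightarrow> 'b \<Rightarrow> real" where B: "\<And>n. continuous_map Y euclideanreal (B n) \<and> B n (pt n) = 1 \<and>
     (\<forall>z \<in> topspace Y. 0 \<le> B n z \<and> B n z \<le> 1) \<and> (\<forall>z \<in> topspace Y - W n. B n z = 0)"
    by metis
  have Bsupp: "z \<in> topspace Y \<Longrightarrow> B k z \<noteq> 0 \<Longrightarrow> z \<in> W k" for k z using B[of k] by blast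
  have Buniq: "z \<in> topspace Y \<Longrightarrow> B k z \<noteq> 0 \<Longrightarrow> j \<noteq> k \<Longrightarrow> B j z = 0" for j k z
    using Bsupp Wd[of j k] by blast
  define F where "F = (\<lambda>x y. \<Sum>n\<in>{n. tau n (\<alpha> x) \<noteq> 0}. tau n (\<alpha> x) * (g x * B (2*n) y + h x * B (2*n+1) y))"
  have formula: "F x y = tau m (\<alpha> x) * (g x * B (2*m) y + h x * B (2*m+1) y)"
    if "\<And>n. n \<noteq> m \<Longrightarrow> B (2*n) y = 0 \<and> B (2*n+1) y = 0" for x y m
    unfolding F_def
    by (rule sum_single[OF tau_finite]) (use that in auto)
  have exm: "\<exists>m. (\<forall>n. n \<noteq> m \<longrightarrow> B (2*n) y = 0 \<and> B (2*n+1) y = 0) \<and> (B (2*m) y = 0 \<or> B (2*m+1) y = 0)"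
    if y: "y \<in> topspace Y" for y
  proof (cases "\<exists>k. B k y \<noteq> 0")
    case False then show ?thesis by auto
  next
    case True
    then obtain k where k: "B k y \<noteq> 0" by blast
    have c1: "B (2*n) y = 0 \<and> B (2*n+1) y = 0" if "n \<noteq> k div 2" for n
    proof -
      have "2*n \<noteq> k" "2*n+1 \<noteq> k" using that by auto
      then show ?thesis using Buniq[OF y k] by auto
    qed
    have "2*(k div 2) \<noteq> 2*(k div 2)+1" by simp
    then have c2: "B (2*(k div 2)) y = 0 \<or> B (2*(k div 2)+1) y = 0"
      using Buniq[OF y] by metis
    show ?thesis using c1 c2 by blast
  qed
  show ?thesis
  proof (intro exI[of _ F] conjI ballI)
    show "separately_continuous X Y F"
      unfolding separately_continuous_def
    proof (intro conjI ballI)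
      fix x assume x: "x \<in> topspace X"
      show "continuous_map Y euclideanreal (\<lambda>y. F x y)"
        unfolding F_def
        by (intro continuous_map_sum tau_finite continuous_intros) (use B in auto)
    next
      fix y assume y: "y \<in> topspace Y"
      obtain m where m: "\<forall>n. n \<noteq> m \<longrightarrow> B (2*n) y = 0 \<and> B (2*n+1) y = 0" using exm[OF y] by blast
      have Fy: "tau m (\<alpha> x) * (g x * B (2*m) y + h x * B (2*m+1) y) = F x y" for x
        by (rule formula[symmetric]) (use m in blast)
      have "continuous_map X euclideanreal (\<lambda>x. tau m (\<alpha> x) * (g x * B (2*m) y + h x * B (2*m+1) y))"
        by (intro continuous_intros tau_cont alr assms(5,6))
      then show "continuous_map X euclideanreal (\<lambda>x. F x y)"
        by (rule continuous_map_eq) (simp only: Fy)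
    qed
  next
    show "supp2 X Y F \<subseteq> (topspace X - A) \<times> G"
    proof
      fix p assume "p \<in> supp2 X Y F"
      then obtain x y where p: "p = (x,y)" "x \<in> topspace X" "y \<in> topspace Y" "F x y \<noteq> 0"
        unfolding supp2_def by auto
      obtain m where m: "\<forall>n. n \<noteq> m \<longrightarrow> B (2*n) y = 0 \<and> B (2*n+1) y = 0" using exm[OF p(3)] by blast
      have Fe: "F x y = tau m (\<alpha> x) * (g x * B (2*m) y + h x * B (2*m+1) y)" using formula m by auto
      have "\<alpha> x \<noteq> 0" using Fe p(4) tau_nonpos[of "\<alpha> x" m] by auto
      then have "x \<notin> A" using Aeq by auto
      moreover have "B (2*m) y \<noteq> 0 \<or> B (2*m+1) y \<noteq> 0" using Fe p(4) by auto
      then have "y \<in> G" using Bsupp[OF p(3)] W by blast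
      ultimately show "p \<in> (topspace X - A) \<times> G" using p by auto
    qed
  next
    fix x assume x: "x \<in> topspace X - A"
    have xX: "x \<in> topspace X" using x by auto
    have t: "0 < \<alpha> x" "\<alpha> x \<le> 1" using x alv[OF xX] Aeq by auto
    obtain m where m: "tau m (\<alpha> x) = 1" using tau_one[OF t] by blast
    have gh: "g x \<le> 0" "0 \<le> h x" using assms(7) xX by auto
    have bounds: "g x \<le> F x y \<and> F x y \<le> h x" if y: "y \<in> G" for y
    proof -
      have yY: "y \<in> topspace Y" using y GY by auto
      obtain k where k: "\<forall>n. n \<noteq> k \<longrightarrow> B (2*n) y = 0 \<and> B (2*n+1) y = 0"
        "B (2*k) y = 0 \<or> B (2*k+1) y = 0" using exm[OF yY] by blast
      have Fe: "F x y = tau k (\<alpha> x) * (g x * B (2*k) y + h x * B (2*k+1) y)" using formula k by auto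
      have r: "0 \<le> tau k (\<alpha> x) * B j y" "tau k (\<alpha> x) * B j y \<le> 1" for j
        using B[of j] yY tau_range[of k "\<alpha> x"] by (auto simp: mult_le_one)
      show ?thesis
      proof (cases "B (2*k) y = 0")
        case True
        then have "F x y = h x * (tau k (\<alpha> x) * B (2*k+1) y)" using Fe by simp
        then show ?thesis using aux_h[OF gh(2) r[of "2*k+1"]] gh by auto
      next
        case False
        then have "F x y = g x * (tau k (\<alpha> x) * B (2*k) y)" using Fe k(2) by simp
        then show ?thesis using aux_g[OF gh(1) r[of "2*k"]] gh by auto
      qed
    qed
    have at: "F x (pt (2*m)) = g x" "F x (pt (2*m+1)) = h x"
    proof -
      have y1: "pt (2*m) \<in> topspace Y" "pt (2*m+1) \<in> topspace Y" using pt W GY by blast+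
      have z1: "B j (pt (2*m)) = 0" if "j \<noteq> 2*m" for j using Buniq[OF y1(1), of "2*m" j] B[of "2*m"] that by auto
      have z2: "B j (pt (2*m+1)) = 0" if "j \<noteq> 2*m+1" for j using Buniq[OF y1(2), of "2*m+1" j] B[of "2*m+1"] that by auto
      have "F x (pt (2*m)) = tau m (\<alpha> x) * (g x * B (2*m) (pt (2*m)) + h x * B (2*m+1) (pt (2*m)))"
        by (rule formula) (use z1 in auto)
      then show "F x (pt (2*m)) = g x" using m B[of "2*m"] z1[of "2*m+1"] by simp
      have "F x (pt (2*m+1)) = tau m (\<alpha> x) * (g x * B (2*m) (pt (2*m+1)) + h x * B (2*m+1) (pt (2*m+1)))"
        by (rule formula) (use z2 in auto)
      then show "F x (pt (2*m+1)) = h x" using m B[of "2*m+1"] z2[of "2*m"] by simp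
    qed
    have inG: "pt (2*m) \<in> G" "pt (2*m+1) \<in> G" using pt W by blast+
    show "\<exists>y\<in>G. F x y = g x" using at inG by blast
    show "g x \<le> F x y" if "y \<in> G" for y using bounds[OF that] by blast
    show "\<exists>y\<in>G. F x y = h x" using at inG by blast
    show "F x y \<le> h x" if "y \<in> G" for y using bounds[OF that] by blast
  qed
qed

end
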